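(* Let $\mathcal X,\mathcal Y$ be nonempty convex compact sets and $\mathcal L:\mathcal X\times\mathcal Y\to\mathbb R$ a differentiable, uniformly strongly convex-concave function with saddle point $(x^*,y^* )$, and let $z=(x,y)\in\mathcal X\times\mathcal Y$. (I) If $(x^*,y^* )$ lies in the relative interior of $\mathcal X\times\mathcal Y$ and $\mu^{int}_{\mathcal L}>0$ (with reference point $(x^*,y^* )$), then $w(z)\le\frac{(g^{FW}(z))^2}{2\mu^{int}_{\mathcal L}}$. (P) If $\mathcal X=\mathrm{conv}(\mathcal A)$, $\mathcal Y=\mathrm{conv}(\mathcal B)$ with $\mathcal A,\mathcal B$ finite and $\mu^A_{\mathcal L}>0$, then for any active set expansion of $z$, $w(z)\le h(z)\le\frac{(g^{PFW}(z))^2}{2\mu^A_{\mathcal L}}$, where $g^{PFW}(z)$ is computed with respect to that expansion.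
   Context: Convex-concave: $\mathcal L(\cdot,y)$ convex, $\mathcal L(x,\cdot)$ concave. Uniformly strongly convex-concave: there are $\mu_{\mathcal X},\mu_{\mathcal Y}>0$ with $\mathcal L(\cdot,y)$ $\mu_{\mathcal X}$-strongly convex for every $y$ and $-\mathcal L(x,\cdot)$ $\mu_{\mathcal Y}$-strongly convex for every $x$. Saddle point: $\mathcal L(x^*,y)\le\mathcal L(x^*,y^* )\le\mathcal L(x,y^* )$ for all $x,y$. For $z=(x,y)$: $r(z):=(\nabla_x\mathcal L(z),-\nabla_y\mathcal L(z))$, $h(z):=\max_{y'}\mathcal L(x,y')-\min_{x'}\mathcal L(x',y)$, $w(z):=\mathcal L(x,y^* )-\mathcal L(x^*,y)$, $s(z)\in\arg\min_{s\in\mathcal X\times\mathcal Y}\langle s,r(z)\rangle$, $g^{FW}(z):=\langle z-s(z),r(z)\rangle$. Active set expansion: weights $\alpha>0$ on $S_x\subseteq\mathcal A$ and on $S_y\subseteq\mathcal B$, each summing to one, with $x=\sum_{v\in S_x}\alpha_vv$, $y=\sum_{v\in S_y}\alpha_vv$; then $v\in\arg\max_{v\in S_x\times S_y}\langle r(z),v\rangle$ and $g^{PFW}(z):=\langle v-s(z),r(z)\rangle$. $\mathcal F:=\{\mathcal L(\cdot,y):y\in\mathcal Y\}$, $\mathcal G:=\{-\mathcal L(x,\cdot):x\in\mathcal X\}$. Interior strong convexity of $f$ on $\mathcal K$ w.r.t. $x_c$ in its relative interior: $\mu_f^{x_c}:=\inf\frac2{\gamma^2}(f(u)-f(x)-\langle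 u-x,\nabla f(x)\rangle)$ over $x\in\mathcal K\setminus\{x_c\}$, $\gamma\in(0,1]$, $u=x+\gamma(s-x)$ where $s$ is where the ray from $x$ through $x_c$ meets the relative boundary of $\mathcal K$; $\mu^{int}_{\mathcal L}:=\min\{\inf_{f\in\mathcal F}\mu_f^{x^*},\inf_{g\in\mathcal G}\mu_g^{y^*}\}$. Geometric strong convexity of $f$ on $\mathcal K=\mathrm{conv}(\mathcal A)$: for $x\in\mathcal K$, $\mathcal S_x$ = family of $S\subseteq\mathcal A$ such that $x$ is a convex combination of all elements of $S$ with positive coefficients, $v_S(x)\in\arg\max_{v\in S}\langle\nabla f(x),v\rangle$, $v_f(x)\in\arg\min\{\langle\nabla f(x),v\rangle:v=v_S(x),S\in\mathcal S_x\}$, $s_f(x)\in\arg\min_{v\in\mathcal A}\langle\nabla f(x),v\rangle$, $\gamma^A(x,x'):=\frac{\langle-\nabla f(x),x'-x\rangle}{\langle-\nabla f(x),s_f(x)-v_f(x)\rangle}$, $\mu^A_f:=\inf_{x\in\mathcal K}\inf_{x':\langle\nabla f(x),x'-x\rangle<0}\frac2{\gamma^A(x,x')^2}(f(x')-f(x)-\langle x'-x,\nabla f(x)\rangle)$; $\mu^A_{\mathcal L}:=\min\{\inf_{f\in\mathcal F}\mu^A_f\text{ (over }\mathcal A),\inf_{g\in\mathcal G}\mu^A_g\text{ (over }\mathcal B)\}$. *)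

theory Defs
  imports "HOL-Analysis.Analysis"
begin

definition strongly_convex_on :: "real \<Rightarrow> 'a::real_inner set \<Rightarrow> ('a \<Rightarrow> real) \<Rightarrow> bool" where
  "strongly_convex_on \<mu> K f \<longleftrightarrow>
     (\<forall>u\<in>K. \<forall>v\<in>K. \<forall>t::real. 0 \<le> t \<and> t \<le> 1 \<longrightarrow>
        f (t *\<^sub>R u + (1 - t) *\<^sub>R v)
          \<le> t * f u + (1 - t) * f v - \<mu> / 2 * t * (1 - t) * (norm (u - v))\<^sup>2)"

definition saddle_point :: "'a set \<Rightarrow> 'b set \<Rightarrow> ('a \<Rightarrow> 'b \<Rightarrow> real) \<Rightarrow> 'a \<Rightarrow> 'b \<Rightarrow> bool" where
  "saddle_point X Y L xs ys \<longleftrightarrow> xs \<in> X \<and> ys \<in> Y \<and>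
     (\<forall>x\<in>X. \<forall>y\<in>Y. L xs y \<le> L xs ys \<and> L xs ys \<le> L x ys)"

definition ray_exit :: "'a::real_vector set \<Rightarrow> 'a \<Rightarrow> 'a \<Rightarrow> 'a" where
  "ray_exit K x xc = x + Sup {t. 0 \<le> t \<and> x + t *\<^sub>R (xc - x) \<in> K} *\<^sub>R (xc - x)"

definition mu_int :: "'a::real_inner set \<Rightarrow> ('a \<Rightarrow> real) \<Rightarrow> ('a \<Rightarrow> 'a) \<Rightarrow> 'a \<Rightarrow> ereal" where
  "mu_int K f gf xc = Inf {ereal (2 / \<gamma>\<^sup>2 * (f u - f x - (u - x) \<bullet> gf x)) | x \<gamma> u.
      x \<in> K - {xc} \<and> 0 < \<gamma> \<and> \<gamma> \<le> 1 \<and> u = x + \<gamma> *\<^sub>R (ray_exit K x xc - x)}"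

definition active_sets :: "'a::real_vector set \<Rightarrow> 'a \<Rightarrow> 'a set set" where
  "active_sets A x = {S. S \<subseteq> A \<and> S \<noteq> {} \<and> (\<exists>\<alpha>. (\<forall>v\<in>S. 0 < \<alpha> v) \<and> sum \<alpha> S = 1 \<and>
        x = (\<Sum>v\<in>S. \<alpha> v *\<^sub>R v))}"

text \<open>Here  <gf x, v_f x>  = Min over S in S_x of Max over v in S of <gf x, v>,
  and   <gf x, s_f x>  = Min over v in A of <gf x, v>.\<close>
definition gamma_A :: "'a::real_inner set \<Rightarrow> ('a \<Rightarrow> 'a) \<Rightarrow> 'a \<Rightarrow> 'a \<Rightarrow> real" where
  "gamma_A A gf x x' =
     (- gf x \<bullet> (x' - x)) /
     ((Min ((\<lambda>S. Max ((\<lambda>v. gf x \<bullet> v) ` S)) ` active_sets A x)) - Min ((\<lambda>v. gf x \<bullet> v) ` A))"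

definition mu_geo :: "'a::real_inner set \<Rightarrow> ('a \<Rightarrow> real) \<Rightarrow> ('a \<Rightarrow> 'a) \<Rightarrow> ereal" where
  "mu_geo A f gf = Inf {ereal (2 / (gamma_A A gf x x')\<^sup>2 * (f x' - f x - (x' - x) \<bullet> gf x)) | x x'.
      x \<in> convex hull A \<and> x' \<in> convex hull A \<and> gf x \<bullet> (x' - x) < 0}"

definition r_op :: "('a \<Rightarrow> 'b \<Rightarrow> 'a) \<Rightarrow> ('a \<Rightarrow> 'b \<Rightarrow> 'b) \<Rightarrow> 'a \<times> 'b \<Rightarrow> 'a \<times> 'b::uminus" where
  "r_op Gx Gy z = (Gx (fst z) (snd z), - Gy (fst z) (snd z))"

definition w_gap :: "('a \<Rightarrow> 'b \<Rightarrow> real) \<Rightarrow> 'a \<Rightarrow> 'b \<Rightarrow> 'a \<times> 'b \<Rightarrow> real" where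
  "w_gap L xs ys z = L (fst z) ys - L xs (snd z)"

definition h_gap :: "'a set \<Rightarrow> 'b set \<Rightarrow> ('a \<Rightarrow> 'b \<Rightarrow> real) \<Rightarrow> 'a \<times> 'b \<Rightarrow> real" where
  "h_gap X Y L z = (SUP y'\<in>Y. L (fst z) y') - (INF x'\<in>X. L x' (snd z))"

definition mu_int_L :: "'a::real_inner set \<Rightarrow> 'b::real_inner set \<Rightarrow> ('a \<Rightarrow> 'b \<Rightarrow> real)
    \<Rightarrow> ('a \<Rightarrow> 'b \<Rightarrow> 'a) \<Rightarrow> ('a \<Rightarrow> 'b \<Rightarrow> 'b) \<Rightarrow> 'a \<Rightarrow> 'b \<Rightarrow> ereal" where
  "mu_int_L X Y L Gx Gy xs ys =
     min (INF y\<in>Y. mu_int X (\<lambda>a. L a y) (\<lambda>a. Gx a y) xs)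
         (INF x\<in>X. mu_int Y (\<lambda>b. - L x b) (\<lambda>b. - Gy x b) ys)"

definition mu_geo_L :: "'a::real_inner set \<Rightarrow> 'b::real_inner set \<Rightarrow> 'a set \<Rightarrow> 'b set \<Rightarrow> ('a \<Rightarrow> 'b \<Rightarrow> real)
    \<Rightarrow> ('a \<Rightarrow> 'b \<Rightarrow> 'a) \<Rightarrow> ('a \<Rightarrow> 'b \<Rightarrow> 'b) \<Rightarrow> ereal" where
  "mu_geo_L X Y A B L Gx Gy =
     min (INF y\<in>Y. mu_geo A (\<lambda>a. L a y) (\<lambda>a. Gx a y))
         (INF x\<in>X. mu_geo B (\<lambda>b. - L x b) (\<lambda>b. - Gy x b))"

definition is_fw_vertex :: "'a set \<Rightarrow> 'b set \<Rightarrow> ('a \<times> 'b::real_inner) \<Rightarrow> ('a::real_inner) \<times> 'b \<Rightarrow> bool" where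
  "is_fw_vertex X Y rz s \<longleftrightarrow> s \<in> X \<times> Y \<and> (\<forall>s'\<in>X \<times> Y. s \<bullet> rz \<le> s' \<bullet> rz)"

definition g_FW :: "('a::real_inner) \<times> ('b::real_inner) \<Rightarrow> 'a \<times> 'b \<Rightarrow> 'a \<times> 'b \<Rightarrow> real" where
  "g_FW z rz s = (z - s) \<bullet> rz"

definition active_expansion :: "'a set \<Rightarrow> 'b set \<Rightarrow> 'a::real_vector \<times> 'b::real_vector
    \<Rightarrow> 'a set \<Rightarrow> 'b set \<Rightarrow> ('a \<Rightarrow> real) \<Rightarrow> ('b \<Rightarrow> real) \<Rightarrow> bool" where
  "active_expansion A B z Sx Sy \<alpha> \<beta> \<longleftrightarrow>
     Sx \<subseteq> A \<and> Sy \<subseteq> B \<and>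
     (\<forall>u\<in>Sx. 0 < \<alpha> u) \<and> sum \<alpha> Sx = 1 \<and> fst z = (\<Sum>u\<in>Sx. \<alpha> u *\<^sub>R u) \<and>
     (\<forall>u\<in>Sy. 0 < \<beta> u) \<and> sum \<beta> Sy = 1 \<and> snd z = (\<Sum>u\<in>Sy. \<beta> u *\<^sub>R u)"

definition is_away_vertex :: "'a set \<Rightarrow> 'b set \<Rightarrow> ('a::real_inner) \<times> ('b::real_inner) \<Rightarrow> 'a \<times> 'b \<Rightarrow> bool" where
  "is_away_vertex Sx Sy rz v \<longleftrightarrow> v \<in> Sx \<times> Sy \<and> (\<forall>v'\<in>Sx \<times> Sy. v' \<bullet> rz \<le> v \<bullet> rz)"

definition g_PFW :: "('a::real_inner) \<times> ('b::real_inner) \<Rightarrow> 'a \<times> 'b \<Rightarrow> 'a \<times> 'b \<Rightarrow> real" where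
  "g_PFW rz v s = (v - s) \<bullet> rz"

end

theory Submission
  imports Defs
begin


lemma tangent_gen:
  fixes F :: "'c::real_normed_vector \<Rightarrow> real"
  assumes D: "(F has_derivative F') (at p)"
    and C: "\<And>t. 0 < t \<Longrightarrow> t < 1 \<Longrightarrow> F (p + t *\<^sub>R d) \<le> F p + t * c"
  shows "F' d \<le> c"
proof -
  have lin: "linear F'" using D has_derivative_linear by blast
  have d1: "((\<lambda>t::real. p + t *\<^sub>R d) has_derivative (\<lambda>t. t *\<^sub>R d)) (at 0)"
    by (auto intro!: derivative_eq_intros)
  have "((\<lambda>t::real. F (p + t *\<^sub>R d)) has_derivative (\<lambda>t. F' (t *\<^sub>R d))) (at 0)"
    using has_derivative_compose[OF d1, of F F'] D by simp
  moreover have "(\<lambda>t. F' (t *\<^sub>R d)) = (*) (F' d)"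
    using lin by (auto simp: linear_scale)
  ultimately have "((\<lambda>t::real. F (p + t *\<^sub>R d)) has_field_derivative (F' d)) (at 0)"
    by (simp add: has_field_derivative_def)
  hence L: "((\<lambda>t. (F (p + t *\<^sub>R d) - F p) / t) \<longlongrightarrow> F' d) (at 0)"
    by (simp add: has_field_derivative_iff)
  hence L': "((\<lambda>t. (F (p + t *\<^sub>R d) - F p) / t) \<longlongrightarrow> F' d) (at_right 0)"
    using L filterlim_at_split by blast
  have "eventually (\<lambda>t. (F (p + t *\<^sub>R d) - F p) / t \<le> c) (at_right (0::real))"
  proof (rule eventually_mono)
    show "eventually (\<lambda>t. t \<in> {0<..<1}) (at_right (0::real))"
      by (rule eventually_at_right_real) simp
  next
    fix t :: real assume "t \<in> {0<..<1}"
    hence "0 < t" "t < 1" by auto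
    with C[of t] show "(F (p + t *\<^sub>R d) - F p) / t \<le> c"
      by (simp add: divide_le_eq mult.commute)
  qed
  thus ?thesis using tendsto_upperbound[OF L'] by simp
qed

lemma ereal_conv:
  fixes a c :: real and M :: ereal
  assumes "M > 0" "c \<ge> 0" "\<And>m. m > 0 \<Longrightarrow> ereal m \<le> M \<Longrightarrow> a \<le> c / (2 * m)"
  shows "ereal a \<le> ereal c / (2 * M)"
proof (cases M)
  case (real r)
  hence "r > 0" using assms by simp
  hence "a \<le> c / (2*r)" using assms(3)[of r] real by simp
  thus ?thesis using real \<open>r>0\<close> by simp
next
  case PInf
  have "a \<le> 0"
  proof (rule ccontr)
    assume "\<not> a \<le> 0"
    hence a: "a > 0" by simp
    define m where "m = (c + 1) / a"
    have "m > 0" using a assms(2) by (simp add: m_def)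
    hence "a \<le> c / (2*m)" using assms(3)[of m] PInf by simp
    also have "\<dots> = c * a / (2 * (c+1))" using a assms(2) by (simp add: m_def field_simps)
    also have "\<dots> < a" using a assms(2) mult_nonneg_nonneg[of a c] by (simp add: field_simps add_nonneg_pos)
    finally show False by simp
  qed
  thus ?thesis using PInf by simp
next
  case MInf thus ?thesis using assms by simp
qed


lemma int_bound:
  fixes f :: "'a::real_inner \<Rightarrow> real"
  assumes K: "compact K" and x: "x \<in> K" and xc: "xc \<in> K" and m: "0 < m"
    and mle: "ereal m \<le> mu_int K f gf xc" and s: "s \<in> K"
    and smin: "\<forall>k\<in>K. s \<bullet> gf x \<le> k \<bullet> gf x"
  shows "f x - f xc \<le> ((x - s) \<bullet> gf x)\<^sup>2 / (2*m)"
proof (cases "x = xc")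
  case True thus ?thesis using m by simp
next
  case False
  define d where "d = xc - x"
  have dnz: "d \<noteq> 0" using False by (simp add: d_def)
  define S where "S = {t. 0 \<le> t \<and> x + t *\<^sub>R d \<in> K}"
  define T where "T = Sup S"
  have 1: "1 \<in> S" using xc by (simp add: S_def d_def)
  obtain B where B: "\<forall>k\<in>K. norm k \<le> B" using compact_imp_bounded[OF K] bounded_iff by blast
  have bdd: "bdd_above S"
  proof (rule bdd_aboveI)
    fix t assume "t \<in> S"
    hence t: "0 \<le> t" "x + t *\<^sub>R d \<in> K" by (auto simp: S_def)
    have "t * norm d = norm (t *\<^sub>R d)" using t by simp
    also have "\<dots> \<le> norm (x + t *\<^sub>R d) + norm x" by (metis add_diff_cancel_left' norm_triangle_ineq4)
    also have "\<dots> \<le> B + norm x" using B t by auto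
    finally show "t \<le> (B + norm x) / norm d" using dnz by (simp add: field_simps)
  qed
  have cl: "closed S"
  proof -
    have "S = {0..} \<inter> (\<lambda>t. x + t *\<^sub>R d) -` K" by (auto simp: S_def)
    moreover have "closed ((\<lambda>t. x + t *\<^sub>R d) -` K)"
      by (rule continuous_closed_vimage[OF compact_imp_closed[OF K]]) (intro continuous_intros)
    ultimately show ?thesis by (simp add: closed_Int)
  qed
  have TS: "T \<in> S" unfolding T_def using closed_contains_Sup[OF _ bdd cl] 1 by blast
  have T1: "1 \<le> T" unfolding T_def using cSup_upper[OF 1 bdd] .
  define sb where "sb = x + T *\<^sub>R d"
  have sbK: "sb \<in> K" using TS by (simp add: S_def sb_def)
  have re: "ray_exit K x xc = sb" by (simp add: ray_exit_def sb_def S_def T_def d_def)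
  define \<gamma> where "\<gamma> = 1 / T"
  have g: "0 < \<gamma>" "\<gamma> \<le> 1" using T1 by (auto simp: \<gamma>_def)
  have u: "xc = x + \<gamma> *\<^sub>R (ray_exit K x xc - x)"
    using T1 by (simp add: re sb_def \<gamma>_def d_def)
  have "mu_int K f gf xc \<le> ereal (2 / \<gamma>\<^sup>2 * (f xc - f x - (xc - x) \<bullet> gf x))"
    unfolding mu_int_def
    by (rule Inf_lower) (use x False g u in blast)
  with mle have "ereal m \<le> ereal (2 / \<gamma>\<^sup>2 * (f xc - f x - (xc - x) \<bullet> gf x))" by (rule order_trans)
  hence mi: "m \<le> 2 / \<gamma>\<^sup>2 * (f xc - f x - (xc - x) \<bullet> gf x)" by (simp only: ereal_less_eq)
  define a where "a = (x - sb) \<bullet> gf x"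
  define G where "G = (x - s) \<bullet> gf x"
  have aG: "a \<le> G" using smin sbK by (simp add: a_def G_def inner_diff_left)
  have G0: "0 \<le> G" using smin x by (simp add: G_def inner_diff_left)
  have xcx: "(xc - x) \<bullet> gf x = - \<gamma> * a"
  proof -
    have "xc - x = \<gamma> *\<^sub>R (sb - x)" using u re by simp
    hence "(xc - x) \<bullet> gf x = \<gamma> * ((sb - x) \<bullet> gf x)" by simp
    moreover have "(sb - x) \<bullet> gf x = - a" unfolding a_def by (simp add: inner_diff_left)
    ultimately show ?thesis by simp
  qed
  have mi2: "m * \<gamma>\<^sup>2 \<le> 2 * (f xc - f x + \<gamma> * a)"
    using mi g xcx by (simp add: field_simps)
  have "f x - f xc \<le> \<gamma> * a - m * \<gamma>\<^sup>2 / 2" using mi2 by simp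
  also have "\<dots> \<le> G\<^sup>2 / (2*m)"
  proof (cases "a \<le> 0")
    case True
    have "\<gamma> * a - m * \<gamma>\<^sup>2 / 2 \<le> 0" 
    proof -
      have "0 \<le> m * \<gamma>\<^sup>2" using m by simp
      moreover have "\<gamma> * a \<le> 0" using True g mult_nonneg_nonpos[of \<gamma> a] by simp
      ultimately show ?thesis by simp
    qed
    also have "0 \<le> G\<^sup>2 / (2*m)" using m by simp
    finally show ?thesis .
  next
    case False
    have "a\<^sup>2 \<le> G\<^sup>2" using False aG by (simp add: power_mono)
    moreover have "\<gamma> * a - m * \<gamma>\<^sup>2 / 2 \<le> a\<^sup>2 / (2*m)"
    proof -
      have "0 \<le> (a - m*\<gamma>)\<^sup>2" by simp
      thus ?thesis using m by (simp add: field_simps power2_eq_square)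
    qed
    ultimately show ?thesis using m by (smt (verit) divide_right_mono)
  qed
  finally show ?thesis by (simp add: G_def)
qed



lemma geo_bound:
  fixes f :: "'a::real_inner \<Rightarrow> real"
  assumes x: "x \<in> convex hull A" and x': "x' \<in> convex hull A" and m: "0 < m"
    and mle: "ereal m \<le> mu_geo A f gf"
    and tan: "f x + gf x \<bullet> (x' - x) \<le> f x'"
  shows "f x - f x' \<le> (Min ((\<lambda>S. Max ((\<lambda>v. gf x \<bullet> v) ` S)) ` active_sets A x)
                          - Min ((\<lambda>v. gf x \<bullet> v) ` A))\<^sup>2 / (2*m)"
    (is "_ \<le> ?D\<^sup>2 / _")
proof (cases "gf x \<bullet> (x' - x) < 0")
  case False
  hence "f x - f x' \<le> 0" using tan by simp
  also have "0 \<le> ?D\<^sup>2 / (2*m)" using m by simp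
  finally show ?thesis .
next
  case True
  define \<gamma> where "\<gamma> = gamma_A A gf x x'"
  define c where "c = - (gf x \<bullet> (x' - x))"
  have c: "c > 0" using True by (simp add: c_def)
  have gam: "\<gamma> = c / ?D" by (simp add: \<gamma>_def gamma_A_def c_def)
  have "mu_geo A f gf \<le> ereal (2 / \<gamma>\<^sup>2 * (f x' - f x - (x' - x) \<bullet> gf x))"
    unfolding mu_geo_def \<gamma>_def
    by (rule Inf_lower) (use x x' True in blast)
  with mle have "ereal m \<le> ereal (2 / \<gamma>\<^sup>2 * (f x' - f x - (x' - x) \<bullet> gf x))" by (rule order_trans)
  hence mi: "m \<le> 2 / \<gamma>\<^sup>2 * (f x' - f x + c)" by (simp add: c_def inner_commute)
  have g0: "\<gamma> \<noteq> 0"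
  proof
    assume "\<gamma> = 0" thus False using mi m by simp
  qed
  hence D0: "?D \<noteq> 0" using gam by auto
  have cg: "c = \<gamma> * ?D" using gam D0 by simp
  have mi2: "m * \<gamma>\<^sup>2 \<le> 2 * (f x' - f x + c)" using mi g0 by (simp add: field_simps)
  have "f x - f x' \<le> \<gamma> * ?D - m * \<gamma>\<^sup>2 / 2" using mi2 cg by simp
  also have "\<dots> \<le> ?D\<^sup>2 / (2*m)"
  proof -
    have "0 \<le> (?D - m*\<gamma>)\<^sup>2" by simp
    thus ?thesis using m by (simp add: field_simps power2_eq_square)
  qed
  finally show ?thesis .
qed

lemma D_bounds:
  fixes g :: "'a::real_inner"
  assumes A: "finite A" and Sx: "Sx \<in> active_sets A x" and vx: "vx \<in> Sx"
    and vmax: "\<forall>v'\<in>Sx. v' \<bullet> g \<le> vx \<bullet> g" and sx: "\<forall>k\<in>A. sx \<bullet> g \<le> k \<bullet> g"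
  shows "0 \<le> Min ((\<lambda>S. Max ((\<lambda>v. g \<bullet> v) ` S)) ` active_sets A x) - Min ((\<lambda>v. g \<bullet> v) ` A)
     \<and> Min ((\<lambda>S. Max ((\<lambda>v. g \<bullet> v) ` S)) ` active_sets A x) - Min ((\<lambda>v. g \<bullet> v) ` A)
         \<le> (vx - sx) \<bullet> g"
proof -
  have fin: "finite (active_sets A x)"
    by (rule finite_subset[of _ "Pow A"]) (auto simp: active_sets_def A)
  have Aa: "\<And>S. S \<in> active_sets A x \<Longrightarrow> S \<subseteq> A \<and> S \<noteq> {}" by (auto simp: active_sets_def)
  have An: "A \<noteq> {}" using Aa[OF Sx] by blast
  have maxS: "\<And>S. S \<in> active_sets A x \<Longrightarrow> Min ((\<lambda>v. g \<bullet> v) ` A) \<le> Max ((\<lambda>v. g \<bullet> v) ` S)"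
  proof -
    fix S assume S: "S \<in> active_sets A x"
    then obtain v where v: "v \<in> S" using Aa by blast
    have fS: "finite S" using Aa[OF S] A finite_subset by blast
    have "Min ((\<lambda>v. g \<bullet> v) ` A) \<le> g \<bullet> v" using v Aa[OF S] A by auto
    also have "\<dots> \<le> Max ((\<lambda>v. g \<bullet> v) ` S)" using v fS by auto
    finally show "Min ((\<lambda>v. g \<bullet> v) ` A) \<le> Max ((\<lambda>v. g \<bullet> v) ` S)" .
  qed
  have lo: "Min ((\<lambda>v. g \<bullet> v) ` A) \<le> Min ((\<lambda>S. Max ((\<lambda>v. g \<bullet> v) ` S)) ` active_sets A x)"
    using fin Sx maxS by (subst Min_ge_iff) auto
  have fSx: "finite Sx" using Aa[OF Sx] A finite_subset by blast
  have "Min ((\<lambda>S. Max ((\<lambda>v. g \<bullet> v) ` S)) ` active_sets A x) \<le> Max ((\<lambda>v. g \<bullet> v) ` Sx)"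
    using fin Sx by auto
  also have "\<dots> = g \<bullet> vx"
    using fSx vx vmax by (intro Max_eqI) (auto simp: inner_commute)
  finally have up: "Min ((\<lambda>S. Max ((\<lambda>v. g \<bullet> v) ` S)) ` active_sets A x) \<le> g \<bullet> vx" .
  have "g \<bullet> sx \<le> Min ((\<lambda>v. g \<bullet> v) ` A)" using sx A An by (auto simp: inner_commute)
  moreover have "(vx - sx) \<bullet> g = g \<bullet> vx - g \<bullet> sx" by (simp add: inner_diff_left inner_diff_right inner_commute)
  ultimately have c2: "Min ((\<lambda>S. Max ((\<lambda>v. g \<bullet> v) ` S)) ` active_sets A x) - Min ((\<lambda>v. g \<bullet> v) ` A)
         \<le> (vx - sx) \<bullet> g" using up by linarith
  have c1: "0 \<le> Min ((\<lambda>S. Max ((\<lambda>v. g \<bullet> v) ` S)) ` active_sets A x) - Min ((\<lambda>v. g \<bullet> v) ` A)"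
    using lo by linarith
  show ?thesis using c1 c2 by blast
qed



lemma tan_x:
  fixes L :: "'a::real_inner \<Rightarrow> 'b::real_inner \<Rightarrow> real"
  assumes D: "((\<lambda>p. L (fst p) (snd p)) has_derivative (\<lambda>h. Ga \<bullet> fst h + Gb \<bullet> snd h)) (at (x, y))"
    and sc: "strongly_convex_on \<mu> X (\<lambda>a. L a y)" and mu: "0 \<le> \<mu>"
    and x: "x \<in> X" and x': "x' \<in> X"
  shows "L x y + Ga \<bullet> (x' - x) \<le> L x' y"
proof -
  have "(\<lambda>h. Ga \<bullet> fst h + Gb \<bullet> snd h) (x' - x, 0) \<le> L x' y - L x y"
  proof (rule tangent_gen[OF D])
    fix t :: real assume t: "0 < t" "t < 1"
    have eq: "(x, y) + t *\<^sub>R (x' - x, 0::'b) = (t *\<^sub>R x' + (1 - t) *\<^sub>R x, y)"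
      by (simp add: algebra_simps)
    have "L (t *\<^sub>R x' + (1 - t) *\<^sub>R x) y \<le> t * L x' y + (1 - t) * L x y
            - \<mu> / 2 * t * (1 - t) * (norm (x' - x))\<^sup>2"
      using sc x x' t unfolding strongly_convex_on_def by auto
    also have "\<dots> \<le> t * L x' y + (1 - t) * L x y"
      using mu t by simp
    finally show "(\<lambda>p. L (fst p) (snd p)) ((x, y) + t *\<^sub>R (x' - x, 0))
        \<le> (\<lambda>p. L (fst p) (snd p)) (x, y) + t * (L x' y - L x y)"
      by (simp add: eq algebra_simps)
  qed
  thus ?thesis by simp
qed

lemma tan_y:
  fixes L :: "'a::real_inner \<Rightarrow> 'b::real_inner \<Rightarrow> real"
  assumes D: "((\<lambda>p. L (fst p) (snd p)) has_derivative (\<lambda>h. Ga \<bullet> fst h + Gb \<bullet> snd h)) (at (x, y))"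
    and sc: "strongly_convex_on \<mu> Y (\<lambda>b. - L x b)" and mu: "0 \<le> \<mu>"
    and y: "y \<in> Y" and y': "y' \<in> Y"
  shows "- L x y + (- Gb) \<bullet> (y' - y) \<le> - L x y'"
proof -
  have D': "((\<lambda>p. - L (fst p) (snd p)) has_derivative (\<lambda>h. - (Ga \<bullet> fst h + Gb \<bullet> snd h))) (at (x, y))"
    using has_derivative_minus[OF D] .
  have "(\<lambda>h. - (Ga \<bullet> fst h + Gb \<bullet> snd h)) (0::'a, y' - y) \<le> - L x y' + L x y"
  proof (rule tangent_gen[OF D'])
    fix t :: real assume t: "0 < t" "t < 1"
    have eq: "(x, y) + t *\<^sub>R (0::'a, y' - y) = (x, t *\<^sub>R y' + (1 - t) *\<^sub>R y)"
      by (simp add: algebra_simps)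
    have "- L x (t *\<^sub>R y' + (1 - t) *\<^sub>R y) \<le> t * (- L x y') + (1 - t) * (- L x y)
            - \<mu> / 2 * t * (1 - t) * (norm (y' - y))\<^sup>2"
      using sc y y' t unfolding strongly_convex_on_def by auto
    also have "\<dots> \<le> t * (- L x y') + (1 - t) * (- L x y)"
      using mu t by simp
    finally show "(\<lambda>p. - L (fst p) (snd p)) ((x, y) + t *\<^sub>R (0, y' - y))
        \<le> (\<lambda>p. - L (fst p) (snd p)) (x, y) + t * (- L x y' + L x y)"
      by (simp add: eq algebra_simps)
  qed
  thus ?thesis by simp
qed

lemma sum_sq:
  fixes a b p q m :: real
  assumes "a \<le> p\<^sup>2 / (2*m)" "b \<le> q\<^sup>2 / (2*m)" "0 \<le> p" "0 \<le> q" "0 < m"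
  shows "a + b \<le> (p + q)\<^sup>2 / (2*m)"
proof -
  have "p\<^sup>2 + q\<^sup>2 \<le> (p+q)\<^sup>2" using assms by (simp add: power2_sum)
  hence "p\<^sup>2 / (2*m) + q\<^sup>2 / (2*m) \<le> (p+q)\<^sup>2 / (2*m)"
    using assms by (simp add: add_divide_distrib[symmetric] divide_right_mono)
  thus ?thesis using assms by linarith
qed

lemma sq_mono_div:
  fixes D g m :: real
  assumes "0 \<le> D" "D \<le> g" "0 < m"
  shows "D\<^sup>2 / (2*m) \<le> g\<^sup>2 / (2*m)"
  using assms by (simp add: divide_right_mono power_mono)



theorem lemma19:
  fixes X :: "'a::euclidean_space set" and Y :: "'b::euclidean_space set"
    and L :: "'a \<Rightarrow> 'b \<Rightarrow> real"
    and Gx :: "'a \<Rightarrow> 'b \<Rightarrow> 'a" and Gy :: "'a \<Rightarrow> 'b \<Rightarrow> 'b"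
    and \<mu>X \<mu>Y :: real and xs :: 'a and ys :: 'b and z :: "'a \<times> 'b"
  assumes X: "X \<noteq> {}" "convex X" "compact X"
    and Y: "Y \<noteq> {}" "convex Y" "compact Y"
    and diff: "\<And>a b. a \<in> X \<Longrightarrow> b \<in> Y \<Longrightarrow>
       ((\<lambda>p. L (fst p) (snd p)) has_derivative (\<lambda>h. Gx a b \<bullet> fst h + Gy a b \<bullet> snd h)) (at (a, b))"
    and mu: "\<mu>X > 0" "\<mu>Y > 0"
    and sc_x: "\<And>b. b \<in> Y \<Longrightarrow> strongly_convex_on \<mu>X X (\<lambda>a. L a b)"
    and sc_y: "\<And>a. a \<in> X \<Longrightarrow> strongly_convex_on \<mu>Y Y (\<lambda>b. - L a b)"
    and saddle: "saddle_point X Y L xs ys"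
    and z: "z \<in> X \<times> Y"
  shows
   "((xs, ys) \<in> rel_interior (X \<times> Y) \<and> mu_int_L X Y L Gx Gy xs ys > 0 \<longrightarrow>
       (\<forall>s. is_fw_vertex X Y (r_op Gx Gy z) s \<longrightarrow>
          ereal (w_gap L xs ys z)
            \<le> ereal ((g_FW z (r_op Gx Gy z) s)\<^sup>2) / (2 * mu_int_L X Y L Gx Gy xs ys)))
    \<and> (\<forall>A B. finite A \<and> finite B \<and> X = convex hull A \<and> Y = convex hull B \<and>
             mu_geo_L X Y A B L Gx Gy > 0 \<longrightarrow>
          (\<forall>Sx Sy \<alpha> \<beta> v s.
              active_expansion A B z Sx Sy \<alpha> \<beta> \<and>
              is_away_vertex Sx Sy (r_op Gx Gy z) v \<and>
              is_fw_vertex X Y (r_op Gx Gy z) s \<longrightarrow>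
              w_gap L xs ys z \<le> h_gap X Y L z \<and>
              ereal (h_gap X Y L z)
                \<le> ereal ((g_PFW (r_op Gx Gy z) v s)\<^sup>2) / (2 * mu_geo_L X Y A B L Gx Gy)))"
proof -
  obtain x y where zxy: "z = (x, y)" by (cases z)
  have xX: "x \<in> X" and yY: "y \<in> Y" using z zxy by auto
  have xsX: "xs \<in> X" and ysY: "ys \<in> Y"
    and sad: "\<And>a b. a \<in> X \<Longrightarrow> b \<in> Y \<Longrightarrow> L xs b \<le> L xs ys \<and> L xs ys \<le> L a ys"
    using saddle unfolding saddle_point_def by auto
  have rz: "r_op Gx Gy z = (Gx x y, - Gy x y)" by (simp add: r_op_def zxy)
  have Dxy: "((\<lambda>p. L (fst p) (snd p)) has_derivative (\<lambda>h. Gx x y \<bullet> fst h + Gy x y \<bullet> snd h)) (at (x, y))"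
    using diff xX yY by blast
  have fwdec: "\<And>s. is_fw_vertex X Y (r_op Gx Gy z) s \<Longrightarrow>
      fst s \<in> X \<and> snd s \<in> Y \<and> (\<forall>k\<in>X. fst s \<bullet> Gx x y \<le> k \<bullet> Gx x y)
      \<and> (\<forall>k\<in>Y. snd s \<bullet> (- Gy x y) \<le> k \<bullet> (- Gy x y))"
  proof -
    fix s assume fw: "is_fw_vertex X Y (r_op Gx Gy z) s"
    obtain sx sy where s: "s = (sx, sy)" by (cases s)
    have sX: "sx \<in> X" "sy \<in> Y" and mn: "\<forall>s'\<in>X \<times> Y. s \<bullet> (Gx x y, - Gy x y) \<le> s' \<bullet> (Gx x y, - Gy x y)"
      using fw s rz unfolding is_fw_vertex_def by auto
    have 1: "\<forall>k\<in>X. sx \<bullet> Gx x y \<le> k \<bullet> Gx x y"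
    proof
      fix k assume "k \<in> X"
      hence "(k, sy) \<in> X \<times> Y" using sX by simp
      thus "sx \<bullet> Gx x y \<le> k \<bullet> Gx x y" using mn s by fastforce
    qed
    have 2: "\<forall>k\<in>Y. sy \<bullet> (- Gy x y) \<le> k \<bullet> (- Gy x y)"
    proof
      fix k assume "k \<in> Y"
      hence "(sx, k) \<in> X \<times> Y" using sX by simp
      thus "sy \<bullet> (- Gy x y) \<le> k \<bullet> (- Gy x y)" using mn s by fastforce
    qed
    show "fst s \<in> X \<and> snd s \<in> Y \<and> (\<forall>k\<in>X. fst s \<bullet> Gx x y \<le> k \<bullet> Gx x y)
      \<and> (\<forall>k\<in>Y. snd s \<bullet> (- Gy x y) \<le> k \<bullet> (- Gy x y))" using s sX 1 2 by simp
  qed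
  have gsplit: "\<And>a. a \<bullet> r_op Gx Gy z = fst a \<bullet> Gx x y + snd a \<bullet> (- Gy x y)"
    by (simp add: rz inner_prod_def)
  have partI: "(xs, ys) \<in> rel_interior (X \<times> Y) \<and> mu_int_L X Y L Gx Gy xs ys > 0 \<longrightarrow>
       (\<forall>s. is_fw_vertex X Y (r_op Gx Gy z) s \<longrightarrow>
          ereal (w_gap L xs ys z)
            \<le> ereal ((g_FW z (r_op Gx Gy z) s)\<^sup>2) / (2 * mu_int_L X Y L Gx Gy xs ys))"
  proof (intro impI allI)
    fix s assume H: "(xs, ys) \<in> rel_interior (X \<times> Y) \<and> mu_int_L X Y L Gx Gy xs ys > 0"
      and fw: "is_fw_vertex X Y (r_op Gx Gy z) s"
    define sx where "sx = fst s"
    define sy where "sy = snd s"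
    have sX: "sx \<in> X" "sy \<in> Y" and m1: "\<forall>k\<in>X. sx \<bullet> Gx x y \<le> k \<bullet> Gx x y"
      and m2: "\<forall>k\<in>Y. sy \<bullet> (- Gy x y) \<le> k \<bullet> (- Gy x y)"
      using fwdec[OF fw] by (auto simp: sx_def sy_def)
    define gx where "gx = (x - sx) \<bullet> Gx x y"
    define gy where "gy = (y - sy) \<bullet> (- Gy x y)"
    have gx0: "0 \<le> gx" using m1 xX by (simp add: gx_def inner_diff_left)
    have gy0: "0 \<le> gy" using m2 yY unfolding gy_def inner_diff_left by fastforce
    have gfw: "g_FW z (r_op Gx Gy z) s = gx + gy"
      unfolding g_FW_def gsplit by (simp add: zxy gx_def gy_def sx_def sy_def)
    show "ereal (w_gap L xs ys z)
            \<le> ereal ((g_FW z (r_op Gx Gy z) s)\<^sup>2) / (2 * mu_int_L X Y L Gx Gy xs ys)"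
    proof (rule ereal_conv)
      show "0 < mu_int_L X Y L Gx Gy xs ys" using H by simp
      show "0 \<le> (g_FW z (r_op Gx Gy z) s)\<^sup>2" by simp
      fix m :: real assume m: "0 < m" "ereal m \<le> mu_int_L X Y L Gx Gy xs ys"
      have mX: "ereal m \<le> mu_int X (\<lambda>a. L a y) (\<lambda>a. Gx a y) xs"
        using m(2) yY unfolding mu_int_L_def
        by (meson INF_lower min.boundedE order_trans)
      have mY: "ereal m \<le> mu_int Y (\<lambda>b. - L x b) (\<lambda>b. - Gy x b) ys"
        using m(2) xX unfolding mu_int_L_def
        by (meson INF_lower min.boundedE order_trans)
      have b1: "L x y - L xs y \<le> gx\<^sup>2 / (2*m)"
        using int_bound[OF X(3) xX xsX m(1) mX sX(1)] m1 by (simp add: gx_def)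
      have b2: "- L x y - (- L x ys) \<le> gy\<^sup>2 / (2*m)"
        using int_bound[OF Y(3) yY ysY m(1) mY sX(2)] m2 by (simp add: gy_def)
      have "L x ys - L xs y \<le> (gx + gy)\<^sup>2 / (2*m)"
        using sum_sq[OF b1 b2 gx0 gy0 m(1)] by simp
      thus "w_gap L xs ys z \<le> (g_FW z (r_op Gx Gy z) s)\<^sup>2 / (2 * m)"
        unfolding gfw by (simp add: w_gap_def zxy)
    qed
  qed
  have partP: "\<forall>A B. finite A \<and> finite B \<and> X = convex hull A \<and> Y = convex hull B \<and>
             mu_geo_L X Y A B L Gx Gy > 0 \<longrightarrow>
          (\<forall>Sx Sy \<alpha> \<beta> v s.
              active_expansion A B z Sx Sy \<alpha> \<beta> \<and>
              is_away_vertex Sx Sy (r_op Gx Gy z) v \<and>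
              is_fw_vertex X Y (r_op Gx Gy z) s \<longrightarrow>
              w_gap L xs ys z \<le> h_gap X Y L z \<and>
              ereal (h_gap X Y L z)
                \<le> ereal ((g_PFW (r_op Gx Gy z) v s)\<^sup>2) / (2 * mu_geo_L X Y A B L Gx Gy))"
  proof (intro allI impI)
    fix A B Sx Sy \<alpha> \<beta> v s
    assume H: "finite A \<and> finite B \<and> X = convex hull A \<and> Y = convex hull B \<and> mu_geo_L X Y A B L Gx Gy > 0"
      and H2: "active_expansion A B z Sx Sy \<alpha> \<beta> \<and> is_away_vertex Sx Sy (r_op Gx Gy z) v \<and>
              is_fw_vertex X Y (r_op Gx Gy z) s"
    have fA: "finite A" and fB: "finite B" and XA: "X = convex hull A" and YB: "Y = convex hull B"
      and M0: "mu_geo_L X Y A B L Gx Gy > 0" using H by auto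
    have ae: "active_expansion A B z Sx Sy \<alpha> \<beta>" and av: "is_away_vertex Sx Sy (r_op Gx Gy z) v"
      and fw: "is_fw_vertex X Y (r_op Gx Gy z) s" using H2 by auto
    define sx where "sx = fst s"
    define sy where "sy = snd s"
    have sX: "sx \<in> X" "sy \<in> Y" and m1: "\<forall>k\<in>X. sx \<bullet> Gx x y \<le> k \<bullet> Gx x y"
      and m2: "\<forall>k\<in>Y. sy \<bullet> (- Gy x y) \<le> k \<bullet> (- Gy x y)"
      using fwdec[OF fw] by (auto simp: sx_def sy_def)
    have AX: "A \<subseteq> X" by (simp add: XA hull_subset)
    have BY: "B \<subseteq> Y" by (simp add: YB hull_subset)
    have m1A: "\<forall>k\<in>A. sx \<bullet> Gx x y \<le> k \<bullet> Gx x y" using m1 AX by blast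
    have m2B: "\<forall>k\<in>B. sy \<bullet> (- Gy x y) \<le> k \<bullet> (- Gy x y)" using m2 BY by blast
    define vx where "vx = fst v"
    define vy where "vy = snd v"
    have vS: "vx \<in> Sx" "vy \<in> Sy" and vmx: "\<forall>v'\<in>Sx \<times> Sy. v' \<bullet> r_op Gx Gy z \<le> v \<bullet> r_op Gx Gy z"
      using av unfolding is_away_vertex_def vx_def vy_def by auto
    have vm1: "\<forall>v'\<in>Sx. v' \<bullet> Gx x y \<le> vx \<bullet> Gx x y"
    proof
      fix v' assume "v' \<in> Sx"
      hence "(v', vy) \<in> Sx \<times> Sy" using vS by simp
      thus "v' \<bullet> Gx x y \<le> vx \<bullet> Gx x y" using vmx by (fastforce simp: gsplit vx_def vy_def)
    qed
    have vm2: "\<forall>v'\<in>Sy. v' \<bullet> (- Gy x y) \<le> vy \<bullet> (- Gy x y)"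
    proof
      fix v' assume "v' \<in> Sy"
      hence "(vx, v') \<in> Sx \<times> Sy" using vS by simp
      thus "v' \<bullet> (- Gy x y) \<le> vy \<bullet> (- Gy x y)" using vmx by (fastforce simp: gsplit vx_def vy_def)
    qed
    have SxA: "Sx \<in> active_sets A x"
    proof -
      have "Sx \<noteq> {}" using ae unfolding active_expansion_def by auto
      thus ?thesis using ae unfolding active_expansion_def active_sets_def by (auto simp: zxy)
    qed
    have SyB: "Sy \<in> active_sets B y"
    proof -
      have "Sy \<noteq> {}" using ae unfolding active_expansion_def by auto
      thus ?thesis using ae unfolding active_expansion_def active_sets_def by (auto simp: zxy)
    qed
    define gx where "gx = (vx - sx) \<bullet> Gx x y"
    define gy where "gy = (vy - sy) \<bullet> (- Gy x y)"
    define Dx where "Dx = Min ((\<lambda>S. Max ((\<lambda>v. Gx x y \<bullet> v) ` S)) ` active_sets A x) - Min ((\<lambda>v. Gx x y \<bullet> v) ` A)"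
    define Dy where "Dy = Min ((\<lambda>S. Max ((\<lambda>v. - Gy x y \<bullet> v) ` S)) ` active_sets B y) - Min ((\<lambda>v. - Gy x y \<bullet> v) ` B)"
    have Dxb: "0 \<le> Dx" "Dx \<le> gx"
      using D_bounds[OF fA SxA vS(1) vm1 m1A] by (auto simp: Dx_def gx_def)
    have Dyb: "0 \<le> Dy" "Dy \<le> gy"
      using D_bounds[OF fB SyB vS(2) vm2 m2B] by (auto simp: Dy_def gy_def)
    have gpfw: "g_PFW (r_op Gx Gy z) v s = gx + gy"
      unfolding g_PFW_def gsplit by (simp add: gx_def gy_def sx_def sy_def vx_def vy_def)
    have key: "\<And>m. 0 < m \<Longrightarrow> ereal m \<le> mu_geo_L X Y A B L Gx Gy \<Longrightarrow>
        (\<forall>x'\<in>X. L x y - L x' y \<le> gx\<^sup>2 / (2*m)) \<and> (\<forall>y'\<in>Y. L x y' - L x y \<le> gy\<^sup>2 / (2*m))"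
    proof -
      fix m :: real assume m: "0 < m" "ereal m \<le> mu_geo_L X Y A B L Gx Gy"
      have mX: "ereal m \<le> mu_geo A (\<lambda>a. L a y) (\<lambda>a. Gx a y)"
        using m(2) yY unfolding mu_geo_L_def
        by (meson INF_lower min.boundedE order_trans)
      have mY: "ereal m \<le> mu_geo B (\<lambda>b. - L x b) (\<lambda>b. - Gy x b)"
        using m(2) xX unfolding mu_geo_L_def
        by (meson INF_lower min.boundedE order_trans)
      have "\<forall>x'\<in>X. L x y - L x' y \<le> gx\<^sup>2 / (2*m)"
      proof
        fix x' assume x': "x' \<in> X"
        have t: "L x y + Gx x y \<bullet> (x' - x) \<le> L x' y"
          using tan_x[OF Dxy sc_x[OF yY] _ xX x'] mu by simp
        have "L x y - L x' y \<le> Dx\<^sup>2 / (2*m)"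
          using geo_bound[of x A x' m "\<lambda>a. L a y" "\<lambda>a. Gx a y"] xX x' XA m mX t
          by (simp add: Dx_def)
        also have "\<dots> \<le> gx\<^sup>2 / (2*m)" using sq_mono_div[OF Dxb m(1)] .
        finally show "L x y - L x' y \<le> gx\<^sup>2 / (2*m)" .
      qed
      moreover have "\<forall>y'\<in>Y. L x y' - L x y \<le> gy\<^sup>2 / (2*m)"
      proof
        fix y' assume y': "y' \<in> Y"
        have t: "- L x y + (- Gy x y) \<bullet> (y' - y) \<le> - L x y'"
          using tan_y[OF Dxy sc_y[OF xX] _ yY y'] mu by simp
        have "- L x y - (- L x y') \<le> Dy\<^sup>2 / (2*m)"
          using geo_bound[of y B y' m "\<lambda>b. - L x b" "\<lambda>b. - Gy x b"] yY y' YB m mY t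
          by (simp add: Dy_def)
        also have "\<dots> \<le> gy\<^sup>2 / (2*m)" using sq_mono_div[OF Dyb m(1)] .
        finally show "L x y' - L x y \<le> gy\<^sup>2 / (2*m)" by simp
      qed
      ultimately show "(\<forall>x'\<in>X. L x y - L x' y \<le> gx\<^sup>2 / (2*m)) \<and> (\<forall>y'\<in>Y. L x y' - L x y \<le> gy\<^sup>2 / (2*m))" ..
    qed
    have hb: "\<And>m. 0 < m \<Longrightarrow> ereal m \<le> mu_geo_L X Y A B L Gx Gy \<Longrightarrow>
        h_gap X Y L z \<le> (gx + gy)\<^sup>2 / (2*m)"
    proof -
      fix m :: real assume m: "0 < m" "ereal m \<le> mu_geo_L X Y A B L Gx Gy"
      note k = key[OF m]
      have s1: "(SUP y'\<in>Y. L x y') \<le> L x y + gy\<^sup>2 / (2*m)"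
        using k Y(1) by (intro cSUP_least) auto
      have s2: "L x y - gx\<^sup>2 / (2*m) \<le> (INF x'\<in>X. L x' y)"
        using k X(1) by (intro cINF_greatest) auto
      have "h_gap X Y L z \<le> gx\<^sup>2 / (2*m) + gy\<^sup>2 / (2*m)"
        using s1 s2 by (simp add: h_gap_def zxy)
      also have "\<dots> \<le> (gx + gy)\<^sup>2 / (2*m)"
        using sum_sq[of "gx\<^sup>2 / (2*m)" gx m "gy\<^sup>2 / (2*m)" gy] Dxb Dyb m by simp
      finally show "h_gap X Y L z \<le> (gx + gy)\<^sup>2 / (2*m)" .
    qed
    obtain m0 where m0: "0 < ereal m0" "ereal m0 < mu_geo_L X Y A B L Gx Gy"
      using ereal_dense2[OF M0] by blast
    have m0': "0 < m0" "ereal m0 \<le> mu_geo_L X Y A B L Gx Gy" using m0 by auto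
    note k0 = key[OF m0']
    have "w_gap L xs ys z \<le> h_gap X Y L z"
    proof -
      have "L x ys \<le> (SUP y'\<in>Y. L x y')"
        by (rule cSUP_upper[OF ysY]) (use k0 in \<open>auto intro!: bdd_aboveI2[where M = "L x y + gy\<^sup>2 / (2*m0)"]\<close>)
      moreover have "(INF x'\<in>X. L x' y) \<le> L xs y"
        by (rule cINF_lower[OF _ xsX]) (use k0 in \<open>auto intro!: bdd_belowI2[where m = "L x y - gx\<^sup>2 / (2*m0)"]\<close>)
      ultimately show ?thesis by (simp add: w_gap_def h_gap_def zxy)
    qed
    moreover have "ereal (h_gap X Y L z)
                \<le> ereal ((g_PFW (r_op Gx Gy z) v s)\<^sup>2) / (2 * mu_geo_L X Y A B L Gx Gy)"
      by (rule ereal_conv[OF M0]) (auto simp: gpfw intro: hb)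
    ultimately show "w_gap L xs ys z \<le> h_gap X Y L z \<and>
              ereal (h_gap X Y L z)
                \<le> ereal ((g_PFW (r_op Gx Gy z) v s)\<^sup>2) / (2 * mu_geo_L X Y A B L Gx Gy)" ..
  qed
  show ?thesis using partI partP by blast
qed


end
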